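(* For all $p,s\in\mathbb{N}_0$ and all $x\in[0,1]$, $$1\le\frac{\prod_{i=0}^{p+s-1}(1+xi)}{\Big(\prod_{j=0}^{p-1}(1+xj)\Big)\Big(\prod_{k=0}^{s-1}(1+xk)\Big)}\le1+x\,2^{p+s}.$$
   Context: Empty products equal $1$. *)

theory Defs
  imports Complex_Main
begin

end

theory Submission
  imports Defs
begin

lemma key_ineq:
  fixes x p s y r :: real
  assumes "0 \<le> x" "x \<le> 1" "p \<le> s + 1" "p \<le> y" "0 \<le> r" "r \<le> 1 + x*(y-1)" "0 \<le> p" "0 \<le> s"
  shows "r*(1+x*(p+s)) \<le> (1+x*(2*y-1))*(1+x*s)"
proof -
  have "r*(1+x*(p+s)) \<le> (1+x*(y-1))*(1+x*(p+s))"
    by (rule mult_right_mono) (use assms in auto)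
  moreover have "(1+x*(2*y-1))*(1+x*s) - (1+x*(y-1))*(1+x*(p+s))
      = x*((y-p)*(1-x) + x*(y*(s+1-p)))" by (simp add: algebra_simps)
  moreover have "0 \<le> x*((y-p)*(1-x) + x*(y*(s+1-p)))"
    using assms by (intro mult_nonneg_nonneg add_nonneg_nonneg) auto
  ultimately show ?thesis by linarith
qed

context
  fixes x :: real
  assumes x0: "0 \<le> x" and x1: "x \<le> 1"
begin

definition AA :: "nat \<Rightarrow> real" where "AA n = (\<Prod>i<n. 1 + x * real i)"
definition RR :: "nat \<Rightarrow> nat \<Rightarrow> real" where "RR p s = AA (p+s) / (AA p * AA s)"

definition GG where "GG p s \<longleftrightarrow> 1 \<le> RR p s \<and> RR p s \<le> 1 + x*(2^(p+s)-1)"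

lemma AA_pos: "AA n > 0"
  unfolding AA_def using x0 by (intro prod_pos) (auto intro!: add_pos_nonneg)

lemma RR_sym: "RR p s = RR s p"
  unfolding RR_def by (simp add: add.commute mult.commute)

lemma GG_sym: "GG p s = GG s p"
  unfolding GG_def using RR_sym by (simp add: add.commute)

lemma RR_step: "RR p (Suc s) = RR p s * ((1 + x*(p+s)) / (1 + x*s))"
proof -
  have a: "AA (Suc n) = AA n * (1 + x * n)" for n unfolding AA_def by simp
  have "1 + x*s > 0" using x0 by (simp add: add_pos_nonneg)
  then show ?thesis unfolding RR_def using AA_pos[of p] AA_pos[of s] AA_pos[of "p+s"]
    by (simp add: a field_simps)
qed

lemma GG_step: assumes "GG p s" "p \<le> s + 1" shows "GG p (Suc s)"
proof -
  have d: "1 + x*s > 0" using x0 by (simp add: add_pos_nonneg)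
  have r1: "1 \<le> RR p s" and r2: "RR p s \<le> 1 + x*(2^(p+s)-1)" using assms(1) unfolding GG_def by auto
  have f1: "1 \<le> (1 + x*(p+s)) / (1 + x*s)" using d x0 by (simp add: field_simps mult_left_mono)
  have lo: "1 \<le> RR p (Suc s)" unfolding RR_step using r1 f1
    by (metis mult_mono' mult_1_left zero_le_one order_trans)
  have py: "real p \<le> 2^(p+s)"
  proof -
    have "p < 2^p" by (rule less_exp)
    also have "(2::nat)^p \<le> 2^(p+s)" by (rule power_increasing) auto
    finally have "p \<le> (2::nat)^(p+s)" by simp
    then show ?thesis by (metis of_nat_le_iff of_nat_numeral of_nat_power)
  qed
  have "RR p s * (1 + x*(real p+real s)) \<le> (1+x*(2*2^(p+s)-1))*(1+x*real s)"
    by (rule key_ineq) (use x0 x1 assms(2) py r1 r2 in auto)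
  then have "RR p s * (1 + x*(p+s)) \<le> (1+x*(2*2^(p+s)-1))*(1+x*s)" by simp
  then have "RR p s * ((1 + x*(p+s)) / (1 + x*s)) \<le> 1+x*(2*2^(p+s)-1)"
    using d by (simp add: field_simps)
  then show ?thesis using lo unfolding GG_def RR_step by simp
qed

lemma GG_diag: "GG p p \<and> GG p (Suc p)"
proof (induction p)
  case 0
  have "GG 0 0" unfolding GG_def RR_def AA_def by simp
  then show ?case using GG_step[of 0 0] by simp
next
  case (Suc p)
  then have "GG (Suc p) p" using GG_sym by blast
  then have g: "GG (Suc p) (Suc p)" by (rule GG_step) simp
  then show ?case using GG_step[OF g] by simp
qed

lemma GG_up: "GG p (p + d)"
proof (induction d)
  case 0 then show ?case using GG_diag by simp
next
  case (Suc d) then show ?case using GG_step[of p "p+d"] by simp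
qed

lemma GG_all: "GG p s"
proof (cases "p \<le> s")
  case True then show ?thesis using GG_up[of p "s-p"] by simp
next
  case False then show ?thesis using GG_up[of s "p-s"] GG_sym by simp
qed

end

theorem lemma4p3:
  fixes p s :: nat and x :: real
  assumes "0 \<le> x" and "x \<le> 1"
  shows "1 \<le> (\<Prod>i<p+s. 1 + x * real i) /
              ((\<Prod>j<p. 1 + x * real j) * (\<Prod>k<s. 1 + x * real k)) \<and>
         (\<Prod>i<p+s. 1 + x * real i) /
              ((\<Prod>j<p. 1 + x * real j) * (\<Prod>k<s. 1 + x * real k)) \<le> 1 + x * 2 ^ (p + s)"
proof -
  have "GG x p s" by (rule GG_all[OF assms])
  then have "1 \<le> RR x p s \<and> RR x p s \<le> 1 + x*(2^(p+s)-1)" unfolding GG_def[OF assms] .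
  moreover have "x*(2^(p+s)-1) \<le> x * 2^(p+s)" using assms by (simp add: mult_left_mono)
  ultimately show ?thesis unfolding RR_def[OF assms] AA_def[OF assms] by linarith
qed

end
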